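(* Let $G\ge 2$ and $p_t\in(0,1)$. Let $r_{t,1},\dots,r_{t,G}$ be i.i.d. $\mathrm{Bernoulli}(p_t)$, $R=\sum_j r_{t,j}$, $\hat p_t=R/G$, $\hat A_{t,i}=r_{t,i}-\hat p_t$, $A_{t,i}=r_{t,i}-p_t$, $\mathcal S=\{1\le R\le G-1\}$, and fix $i\in[G]$. (a) If $p_t<1/2$, then for every $\epsilon\in\bigl(0,\ \mathbb E[\hat p_t\mid\mathcal S]-p_t\bigr)$, \[ \mathbb P\!\left(A_{t,i}-\hat A_{t,i}>\epsilon\mid\mathcal S\right)=\frac{\sum_{k=\lfloor G(p_t+\epsilon)\rfloor+1}^{G-1}\binom{G}{k}p_t^k(1-p_t)^{G-k}}{1-(1-p_t)^G-p_t^G}. \] (b) If $p_t>1/2$, then for every $\epsilon\in\bigl(0,\ p_t-\mathbb E[\hat p_t\mid\mathcal S]\bigr)$, \[ \mathbb P\!\left(\hat A_{t,i}-A_{t,i}>\epsilon\mid\mathcal S\right)=\frac{\sum_{k=1}^{\lceil G(p_t-\epsilon)\rceil-1}\binom{G}{k}p_t^k(1-p_t)^{G-k}}{1-(1-p_t)^G-p_t^G}. \]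
   Context: Binary-reward group setting: $G$ i.i.d. Bernoulli$(p_t)$ rewards for one prompt, group baseline $\hat p_t$, group-relative advantage $\hat A_{t,i}$, expected advantage $A_{t,i}$, and non-degenerate event $\mathcal S$. A prompt with $p_t<1/2$ is called hard and one with $p_t>1/2$ easy. *)

theory Defs
  imports "HOL-Probability.Probability"
begin

text \<open>Group of G i.i.d. Bernoulli(p) rewards r_1..r_G, indexed 0..G-1.
  An outcome is a function omega :: nat => bool (True = reward 1).\<close>
definition bern_group :: "nat \<Rightarrow> real \<Rightarrow> (nat \<Rightarrow> bool) pmf" where
  "bern_group G p = Pi_pmf {..<G} False (\<lambda>_. bernoulli_pmf p)"

definition rew :: "(nat \<Rightarrow> bool) \<Rightarrow> nat \<Rightarrow> real" where
  "rew \<omega> j = (if \<omega> j then 1 else 0)"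

definition Rtot :: "nat \<Rightarrow> (nat \<Rightarrow> bool) \<Rightarrow> real" where
  "Rtot G \<omega> = (\<Sum>j<G. rew \<omega> j)"

definition phat :: "nat \<Rightarrow> (nat \<Rightarrow> bool) \<Rightarrow> real" where
  "phat G \<omega> = Rtot G \<omega> / real G"

definition Ahat :: "nat \<Rightarrow> nat \<Rightarrow> (nat \<Rightarrow> bool) \<Rightarrow> real" where
  "Ahat G i \<omega> = rew \<omega> i - phat G \<omega>"

definition Aexp :: "real \<Rightarrow> nat \<Rightarrow> (nat \<Rightarrow> bool) \<Rightarrow> real" where
  "Aexp p i \<omega> = rew \<omega> i - p"

definition Sev :: "nat \<Rightarrow> (nat \<Rightarrow> bool) set" where
  "Sev G = {\<omega>. 1 \<le> Rtot G \<omega> \<and> Rtot G \<omega> \<le> real G - 1}"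

definition cprob :: "'a pmf \<Rightarrow> ('a \<Rightarrow> bool) \<Rightarrow> 'a set \<Rightarrow> real" where
  "cprob M P S = measure_pmf.prob M ({x. P x} \<inter> S) / measure_pmf.prob M S"

definition cond_expect :: "'a pmf \<Rightarrow> ('a \<Rightarrow> real) \<Rightarrow> 'a set \<Rightarrow> real" where
  "cond_expect M f S = measure_pmf.expectation M (\<lambda>x. f x * indicator S x) / measure_pmf.prob M S"

end

theory Submission
  imports Defs
begin

lemma Rtot_card: "Rtot G \<omega> = real (card {j\<in>{..<G}. \<omega> j})"
proof -
  have "(\<Sum>j<G. rew \<omega> j) = (\<Sum>j\<in>{j\<in>{..<G}. \<omega> j}. 1)"
    by (intro sum.mono_neutral_cong_right) (auto simp: rew_def)
  thus ?thesis by (simp add: Rtot_def)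
qed

lemma key:
  assumes p: "0 \<le> p" "p \<le> 1"
  shows "measure_pmf.prob (bern_group G p) {\<omega>. Q (card {j\<in>{..<G}. \<omega> j})}
     = (\<Sum>k\<in>{k. k \<le> G \<and> Q k}. real (G choose k) * p ^ k * (1 - p) ^ (G - k))"
proof -
  have eq: "binomial_pmf G p = map_pmf (\<lambda>f. card {x\<in>{..<G}. f x}) (bern_group G p)"
    unfolding bern_group_def by (rule binomial_pmf_altdef') (use p in auto)
  have "measure_pmf.prob (bern_group G p) {\<omega>. Q (card {j\<in>{..<G}. \<omega> j})}
      = measure_pmf.prob (binomial_pmf G p) {k. Q k}"
    by (subst eq) simp
  also have "\<dots> = measure_pmf.prob (binomial_pmf G p) {k. k \<le> G \<and> Q k}"
    using p by (intro measure_prob_cong_0) (auto simp: set_pmf_binomial_eq)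
  also have "\<dots> = (\<Sum>k\<in>{k. k \<le> G \<and> Q k}. pmf (binomial_pmf G p) k)"
    by (rule measure_measure_pmf_finite) auto
  also have "\<dots> = (\<Sum>k\<in>{k. k \<le> G \<and> Q k}. real (G choose k) * p ^ k * (1 - p) ^ (G - k))"
    using p by (intro sum.cong) (auto simp: pmf_binomial)
  finally show ?thesis .
qed



lemma cnt_le: "card {j\<in>{..<G}. (\<omega>::nat\<Rightarrow>bool) j} \<le> G"
  by (metis (no_types, lifting) card_lessThan card_mono finite_lessThan mem_Collect_eq subsetI lessThan_iff)

lemma one_le_real: "(1 \<le> real n) = (1 \<le> n)" by simp

lemma setA: assumes h: "\<And>k. P k \<longleftrightarrow> a + 1 \<le> k"
  shows "{k::nat. k \<le> G \<and> P k \<and> 1 \<le> k \<and> k \<le> G - 1} = {a+1..G-1}"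
proof (intro set_eqI)
  fix k
  have "(k \<le> G \<and> P k \<and> 1 \<le> k \<and> k \<le> G - 1) \<longleftrightarrow> (a + 1 \<le> k \<and> k \<le> G - 1)"
    unfolding h by arith
  then show "k \<in> {k::nat. k \<le> G \<and> P k \<and> 1 \<le> k \<and> k \<le> G - 1} \<longleftrightarrow> k \<in> {a+1..G-1}" by simp
qed

lemma setB: assumes h: "\<And>k. 1 \<le> k \<Longrightarrow> P k \<longleftrightarrow> k \<le> b" and h2: "\<And>k. k \<le> b \<Longrightarrow> k \<le> G - 1"
  shows "{k::nat. k \<le> G \<and> P k \<and> 1 \<le> k \<and> k \<le> G - 1} = {1..b}"
proof (intro set_eqI)
  fix k
  have "(k \<le> G \<and> P k \<and> 1 \<le> k \<and> k \<le> G - 1) \<longleftrightarrow> (1 \<le> k \<and> k \<le> b)"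
    using h[of k] h2[of k] by arith
  then show "k \<in> {k::nat. k \<le> G \<and> P k \<and> 1 \<le> k \<and> k \<le> G - 1} \<longleftrightarrow> k \<in> {1..b}" by simp
qed

lemma aux1: "(G::real) > 0 \<Longrightarrow> (e < c / G - p) \<longleftrightarrow> G * (p + e) < c"
proof -
  assume g: "G > 0"
  have "(e < c / G - p) \<longleftrightarrow> e + p < c / G" by (simp add: less_diff_eq)
  also have "\<dots> \<longleftrightarrow> (e + p) * G < c" using g by (simp add: pos_less_divide_eq)
  finally show ?thesis by (simp add: algebra_simps)
qed

lemma aux2: "(G::real) > 0 \<Longrightarrow> (e < p - c / G) \<longleftrightarrow> c < G * (p - e)"
proof -
  assume g: "G > 0"
  have "(e < p - c / G) \<longleftrightarrow> c / G < p - e" by linarith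
  also have "\<dots> \<longleftrightarrow> c < (p - e) * G" using g by (simp add: pos_divide_less_eq)
  finally show ?thesis by (simp add: algebra_simps)
qed

lemma probS:
  assumes p: "0 \<le> p" "p \<le> 1" and G: "G \<ge> 2"
  shows "measure_pmf.prob (bern_group G p) (Sev G) = 1 - (1 - p) ^ G - p ^ G"
proof -
  let ?f = "\<lambda>k. real (G choose k) * p ^ k * (1 - p) ^ (G - k)"
  have r: "real G - 1 = real (G - 1)" using G by (simp add: of_nat_diff)
  have S: "Sev G = {\<omega>. (\<lambda>k. 1 \<le> k \<and> k \<le> G - 1) (card {j\<in>{..<G}. \<omega> j})}"
    unfolding Sev_def Rtot_card r by simp
  have one: "1 = (\<Sum>k\<in>{k. k \<le> G \<and> True}. ?f k)"
    using key[OF p, of G "\<lambda>_. True"] by simp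
  have B: "{k. k \<le> G \<and> (1 \<le> k \<and> k \<le> G - 1)} = {1..G-1}" by auto
  have A: "{k. k \<le> G \<and> True} = insert 0 (insert G {1..G-1})"
    using G by auto
  have n0: "0 \<notin> insert G {1..G-1}" using G by simp
  have nG: "G \<notin> {1..G-1}" using G by simp
  have "(\<Sum>k\<in>{k. k \<le> G \<and> True}. ?f k) = ?f 0 + (?f G + (\<Sum>k\<in>{1..G-1}. ?f k))"
    unfolding A sum.insert[OF finite_insert[THEN iffD2, OF finite_atLeastAtMost] n0]
      sum.insert[OF finite_atLeastAtMost nG] ..
  moreover have "?f 0 = (1 - p) ^ G" by simp
  moreover have "?f G = p ^ G" by simp
  ultimately have "(\<Sum>k\<in>{1..G-1}. ?f k) = 1 - (1 - p) ^ G - p ^ G" using one by linarith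
  then show ?thesis using S key[OF p, of G "\<lambda>k. 1 \<le> k \<and> k \<le> G - 1"] B by simp
qed

theorem theorem2:
  fixes G i :: nat and p :: real
  assumes "G \<ge> 2" and "0 < p" and "p < 1" and "i < G"
  shows
   "(p < 1/2 \<longrightarrow>
      (\<forall>\<epsilon>. 0 < \<epsilon> \<and> \<epsilon> < cond_expect (bern_group G p) (phat G) (Sev G) - p \<longrightarrow>
         cprob (bern_group G p) (\<lambda>\<omega>. Aexp p i \<omega> - Ahat G i \<omega> > \<epsilon>) (Sev G) =
         (\<Sum>k = nat \<lfloor>real G * (p + \<epsilon>)\<rfloor> + 1 .. G - 1. real (G choose k) * p ^ k * (1 - p) ^ (G - k))
           / (1 - (1 - p) ^ G - p ^ G)))
    \<and> (p > 1/2 \<longrightarrow>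
      (\<forall>\<epsilon>. 0 < \<epsilon> \<and> \<epsilon> < p - cond_expect (bern_group G p) (phat G) (Sev G) \<longrightarrow>
         cprob (bern_group G p) (\<lambda>\<omega>. Ahat G i \<omega> - Aexp p i \<omega> > \<epsilon>) (Sev G) =
         (\<Sum>k = 1 .. nat \<lceil>real G * (p - \<epsilon>)\<rceil> - 1. real (G choose k) * p ^ k * (1 - p) ^ (G - k))
           / (1 - (1 - p) ^ G - p ^ G)))"
proof -
  have p: "0 \<le> p" "p \<le> 1" using assms by auto
  let ?f = "\<lambda>k. real (G choose k) * p ^ k * (1 - p) ^ (G - k)"
  have G0: "real G > 0" using assms by simp
  show ?thesis
  proof (intro conjI impI allI)
    fix e :: real
    assume "0 < e \<and> e < cond_expect (bern_group G p) (phat G) (Sev G) - p"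
    then have e: "0 < e" by simp
    define x where "x = real G * (p + e)"
    have x0: "x \<ge> 0" using e p unfolding x_def by simp
    let ?Q = "\<lambda>k. real G * (p + e) < real k \<and> 1 \<le> k \<and> k \<le> G - 1"
    have ev: "{\<omega>. Aexp p i \<omega> - Ahat G i \<omega> > e} \<inter> Sev G = {\<omega>. ?Q (card {j\<in>{..<G}. \<omega> j})}"
    proof -
      have h: "(Aexp p i \<omega> - Ahat G i \<omega> > e) \<longleftrightarrow> real G * (p + e) < real (card {j\<in>{..<G}. \<omega> j})" for \<omega>
      proof -
        have "Aexp p i \<omega> - Ahat G i \<omega> = real (card {j\<in>{..<G}. \<omega> j}) / real G - p"
          by (simp add: Aexp_def Ahat_def phat_def Rtot_card)
        then show ?thesis using G0 aux1 aux2 by simp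
      qed
      have r: "real G - 1 = real (G - 1)" using assms by (simp add: of_nat_diff)
      show ?thesis unfolding Sev_def Rtot_card r by (intro set_eqI) (simp only: mem_Collect_eq Int_iff h of_nat_le_iff one_le_real)
    qed
    have K: "{k. k \<le> G \<and> ?Q k} = {nat \<lfloor>real G * (p + e)\<rfloor> + 1 .. G - 1}"
    proof -
      have "(x < real k) \<longleftrightarrow> nat \<lfloor>x\<rfloor> + 1 \<le> k" for k
      proof -
        have f0: "0 \<le> \<lfloor>x\<rfloor>" using x0 by simp
        have "(x < real k) \<longleftrightarrow> \<lfloor>x\<rfloor> < int k" by (simp add: floor_less_iff)
        also have "\<dots> \<longleftrightarrow> nat \<lfloor>x\<rfloor> < k" using f0 by (simp add: nat_less_iff)
        also have "\<dots> \<longleftrightarrow> nat \<lfloor>x\<rfloor> + 1 \<le> k" by linarith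
        finally show ?thesis .
      qed
      then show ?thesis unfolding x_def[symmetric]
        by (rule setA[where P="\<lambda>k. x < real k"])
    qed
    show "cprob (bern_group G p) (\<lambda>\<omega>. Aexp p i \<omega> - Ahat G i \<omega> > e) (Sev G) =
         (\<Sum>k = nat \<lfloor>real G * (p + e)\<rfloor> + 1 .. G - 1. ?f k) / (1 - (1 - p) ^ G - p ^ G)"
      unfolding cprob_def probS[OF p assms(1)] ev key[OF p, of G "?Q"] K ..
  next
    fix e :: real
    assume "0 < e \<and> e < p - cond_expect (bern_group G p) (phat G) (Sev G)"
    then have e: "0 < e" by simp
    define x where "x = real G * (p - e)"
    have "real G * (p - e) < real G * 1" using G0 e assms by (intro mult_strict_left_mono) auto
    then have xG: "x < real G" unfolding x_def by simp
    let ?Q = "\<lambda>k. real k < real G * (p - e) \<and> 1 \<le> k \<and> k \<le> G - 1"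
    have ev: "{\<omega>. Ahat G i \<omega> - Aexp p i \<omega> > e} \<inter> Sev G = {\<omega>. ?Q (card {j\<in>{..<G}. \<omega> j})}"
    proof -
      have h: "(Ahat G i \<omega> - Aexp p i \<omega> > e) \<longleftrightarrow> real (card {j\<in>{..<G}. \<omega> j}) < real G * (p - e)" for \<omega>
      proof -
        have "Ahat G i \<omega> - Aexp p i \<omega> = p - real (card {j\<in>{..<G}. \<omega> j}) / real G"
          by (simp add: Aexp_def Ahat_def phat_def Rtot_card)
        then show ?thesis using G0 aux1 aux2 by simp
      qed
      have r: "real G - 1 = real (G - 1)" using assms by (simp add: of_nat_diff)
      show ?thesis unfolding Sev_def Rtot_card r by (intro set_eqI) (simp only: mem_Collect_eq Int_iff h of_nat_le_iff one_le_real)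
    qed
    have K: "{k. k \<le> G \<and> ?Q k} = {1 .. nat \<lceil>real G * (p - e)\<rceil> - 1}"
    proof -
      have "(real k < x) \<longleftrightarrow> k \<le> nat \<lceil>x\<rceil> - 1" if "k \<ge> 1" for k
      proof -
        have "(real k < x) \<longleftrightarrow> int k < \<lceil>x\<rceil>" by (simp add: less_ceiling_iff)
        also have "\<dots> \<longleftrightarrow> k < nat \<lceil>x\<rceil>" by (rule zless_nat_eq_int_zless[symmetric])
        also have "\<dots> \<longleftrightarrow> k \<le> nat \<lceil>x\<rceil> - 1" using that by linarith
        finally show ?thesis .
      qed
      moreover have "k \<le> nat \<lceil>x\<rceil> - 1 \<Longrightarrow> k \<le> G - 1" for k
      proof -
        have "\<lceil>x\<rceil> \<le> int G" using xG by (simp add: ceiling_le_iff)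
        then have "nat \<lceil>x\<rceil> \<le> G" by (simp add: nat_le_iff)
        then show "k \<le> nat \<lceil>x\<rceil> - 1 \<Longrightarrow> k \<le> G - 1" by linarith
      qed
      ultimately show ?thesis unfolding x_def[symmetric]
        by (rule setB[where P="\<lambda>k. real k < x"])
    qed
    show "cprob (bern_group G p) (\<lambda>\<omega>. Ahat G i \<omega> - Aexp p i \<omega> > e) (Sev G) =
         (\<Sum>k = 1 .. nat \<lceil>real G * (p - e)\<rceil> - 1. ?f k) / (1 - (1 - p) ^ G - p ^ G)"
      unfolding cprob_def probS[OF p assms(1)] ev key[OF p, of G "?Q"] K ..
  qed
qed

end
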